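(* Let $(\mathsf{X},\mu)$, $(\mathsf{Y},\nu)$ be Polish probability spaces, $c:\mathsf{X}\times\mathsf{Y}\to[0,\infty)$ continuous, $\pi_\varepsilon$ the $(c,\varepsilon)$-cyclically invariant coupling for each $\varepsilon>0$ (assumed to exist), and assume $\pi_\varepsilon\to\pi_*$ weakly as $\varepsilon\to0$ for some $\pi_*\in\Pi(\mu,\nu)$. Let $(x,y)\in\mathsf{X}\times\mathsf{Y}$. Suppose there exist $k\ge2$ and $(x_i,y_i)_{2\le i\le k}\subset\operatorname{spt}\pi_*$ such that $$\delta_0:=\sum_{i=1}^k c(x_i,y_i)-\sum_{i=1}^k c(x_i,y_{i+1})>0,\quad\text{where }(x_1,y_1):=(x,y),\ y_{k+1}:=y_1.$$ Given $\delta<\delta_0$, there exist $\alpha,r,\varepsilon_0>0$ such that $\pi_\varepsilon(B_r(x,y))\le\alpha e^{-\delta/\varepsilon}$ for all $\varepsilon\le\varepsilon_0$.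
   Context: $\Pi(\mu,\nu)$ is the set of couplings of $\mu,\nu$ and $P:=\mu\otimes\nu$. A coupling $\pi\in\Pi(\mu,\nu)$ is $(c,\varepsilon)$-cyclically invariant if $\pi\sim P$ and its density admits a version $\frac{d\pi}{dP}:\mathsf{X}\times\mathsf{Y}\to(0,\infty)$ such that $\prod_{i=1}^k\frac{d\pi}{dP}(x_i,y_i)=\exp\big(-\frac1\varepsilon[\sum_{i=1}^k c(x_i,y_i)-\sum_{i=1}^k c(x_i,y_{i+1})]\big)\prod_{i=1}^k\frac{d\pi}{dP}(x_i,y_{i+1})$ for all $k\in\mathbb{N}$ and $(x_i,y_i)_{i=1}^k$, with $y_{k+1}:=y_1$; it is unique if it exists. $B_r(z)$ denotes the open ball of radius $r$ around $z$ (for a metric on $\mathsf{X}\times\mathsf{Y}$ compatible with the product topology). *)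

theory Defs
  imports "HOL-Probability.Probability"
begin

definition borel_prob :: "'a::topological_space measure \<Rightarrow> bool" where
  "borel_prob M \<longleftrightarrow> prob_space M \<and> sets M = sets borel"

definition coupling ::
  "'a::polish_space measure \<Rightarrow> 'b::polish_space measure \<Rightarrow> ('a \<times> 'b) measure \<Rightarrow> bool" where
  "coupling \<mu> \<nu> \<pi> \<longleftrightarrow> borel_prob \<pi> \<and> distr \<pi> borel fst = \<mu> \<and> distr \<pi> borel snd = \<nu>"

definition cyclically_invariant ::
  "('a::polish_space \<Rightarrow> 'b::polish_space \<Rightarrow> real) \<Rightarrow> real \<Rightarrow>
   'a measure \<Rightarrow> 'b measure \<Rightarrow> ('a \<times> 'b) measure \<Rightarrow> bool" where
  "cyclically_invariant c \<epsilon> \<mu> \<nu> \<pi> \<longleftrightarrow>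
     coupling \<mu> \<nu> \<pi> \<and>
     absolutely_continuous (\<mu> \<Otimes>\<^sub>M \<nu>) \<pi> \<and> absolutely_continuous \<pi> (\<mu> \<Otimes>\<^sub>M \<nu>) \<and>
     (\<exists>f :: 'a \<times> 'b \<Rightarrow> real.
        f \<in> borel_measurable (\<mu> \<Otimes>\<^sub>M \<nu>) \<and> (\<forall>z. f z > 0) \<and>
        \<pi> = density (\<mu> \<Otimes>\<^sub>M \<nu>) (\<lambda>z. ennreal (f z)) \<and>
        (\<forall>(k::nat) (xs::nat \<Rightarrow> 'a) (ys::nat \<Rightarrow> 'b). k \<ge> 1 \<longrightarrow>
           (\<Prod>i<k. f (xs i, ys i)) =
           exp (- (1 / \<epsilon>) * ((\<Sum>i<k. c (xs i) (ys i)) - (\<Sum>i<k. c (xs i) (ys (Suc i mod k)))))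
           * (\<Prod>i<k. f (xs i, ys (Suc i mod k)))))"

definition spt :: "'a::topological_space measure \<Rightarrow> 'a set" where
  "spt M = {z. \<forall>U. open U \<and> z \<in> U \<longrightarrow> emeasure M U > 0}"

definition weak_conv_filter ::
  "('i \<Rightarrow> 'a::topological_space measure) \<Rightarrow> 'a measure \<Rightarrow> 'i filter \<Rightarrow> bool" where
  "weak_conv_filter P Q F \<longleftrightarrow>
     (\<forall>g :: 'a \<Rightarrow> real. continuous_on UNIV g \<and> bounded (range g) \<longrightarrow>
        ((\<lambda>i. integral\<^sup>L (P i) g) \<longlongrightarrow> integral\<^sup>L Q g) F)"

end

theory Submission imports Defs begin

lemma ennreal_prod_mono:
  fixes f g :: "'i \<Rightarrow> ennreal"
  shows "(\<And>i. i \<in> A \<Longrightarrow> f i \<le> g i) \<Longrightarrow> prod f A \<le> prod g A"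
  by (induct A rule: infinite_finite_induct) (auto intro!: mult_mono)

lemma factor:
  fixes c :: "'a::polish_space \<Rightarrow> 'b::polish_space \<Rightarrow> real"
  fixes xo :: 'a and yo :: 'b
  assumes ci: "cyclically_invariant c \<epsilon> \<mu> \<nu> \<pi>"
  shows "\<exists>f a b. f \<in> borel_measurable (\<mu> \<Otimes>\<^sub>M \<nu>) \<and> \<pi> = density (\<mu> \<Otimes>\<^sub>M \<nu>) (\<lambda>z. ennreal (f z))
     \<and> (\<forall>x. a x > 0) \<and> (\<forall>y. b y > 0) \<and>
     (\<forall>x y. f (x, y) = exp (- c x y / \<epsilon>) * a x * b y) \<and>
     (\<forall>x y. a x = f (x, yo) * exp (c x yo / \<epsilon>) * (exp (- c xo yo / \<epsilon>) / f (xo, yo))) \<and>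
     (\<forall>x y. b y = f (xo, y) * exp (c xo y / \<epsilon>))"
proof -
  obtain f where fm: "f \<in> borel_measurable (\<mu> \<Otimes>\<^sub>M \<nu>)" and fpos: "\<forall>z. f z > 0"
    and pi: "\<pi> = density (\<mu> \<Otimes>\<^sub>M \<nu>) (\<lambda>z. ennreal (f z))"
    and cyc: "\<forall>(k::nat) (xs::nat \<Rightarrow> 'a) (ys::nat \<Rightarrow> 'b). k \<ge> 1 \<longrightarrow>
           (\<Prod>i<k. f (xs i, ys i)) =
           exp (- (1 / \<epsilon>) * ((\<Sum>i<k. c (xs i) (ys i)) - (\<Sum>i<k. c (xs i) (ys (Suc i mod k)))))
           * (\<Prod>i<k. f (xs i, ys (Suc i mod k)))"
    using ci unfolding cyclically_invariant_def by blast
  define a where "a x = f (x, yo) * exp (c x yo / \<epsilon>) * (exp (- c xo yo / \<epsilon>) / f (xo, yo))" for x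
  define b where "b y = f (xo, y) * exp (c xo y / \<epsilon>)" for y
  have key: "f (x, y) = exp (- c x y / \<epsilon>) * a x * b y" for x y
  proof -
    have "f (x, y) * f (xo, yo) = exp (- (1 / \<epsilon>) * ((c x y + c xo yo) - (c x yo + c xo y))) * (f (x, yo) * f (xo, y))"
      using cyc[rule_format, of 2 "\<lambda>i. if i = 0 then x else xo" "\<lambda>i. if i = 0 then y else yo"]
      by (simp add: numeral_2_eq_2 lessThan_Suc ac_simps)
    then have "f (x, y) = exp (- (1 / \<epsilon>) * ((c x y + c xo yo) - (c x yo + c xo y))) * (f (x, yo) * f (xo, y)) / f (xo, yo)"
      using fpos by (metis nonzero_mult_div_cancel_right order_less_irrefl)
    also have "\<dots> = exp (- c x y / \<epsilon>) * a x * b y"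
    proof -
      have e1: "- (1 / \<epsilon>) * ((c x y + c xo yo) - (c x yo + c xo y)) = - c x y / \<epsilon> + c x yo / \<epsilon> + - c xo yo / \<epsilon> + c xo y / \<epsilon>"
        by (cases "\<epsilon> = 0") (simp_all add: field_simps)
      show ?thesis unfolding a_def b_def e1 exp_add by (simp add: divide_inverse ac_simps)
    qed
    finally show ?thesis .
  qed
  have apos: "\<forall>x. a x > 0" using fpos unfolding a_def by simp
  have bpos: "\<forall>y. b y > 0" using fpos unfolding b_def by simp
  show ?thesis
    apply (rule exI[of _ f], rule exI[of _ a], rule exI[of _ b])
    using fm pi key apos bpos a_def b_def by blast
qed

lemma rect_bounds:
  fixes c :: "'a::polish_space \<Rightarrow> 'b::polish_space \<Rightarrow> real"
  assumes bm: "borel_prob \<mu>" and bn: "borel_prob \<nu>"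
    and cc: "continuous_on UNIV (\<lambda>z. c (fst z) (snd z))"
    and ci: "cyclically_invariant c \<epsilon> \<mu> \<nu> \<pi>" and ep: "\<epsilon> > 0"
  shows "\<exists>(A :: 'a set \<Rightarrow> ennreal) (B :: 'b set \<Rightarrow> ennreal). \<forall>U V C \<eta>. open U \<and> open V \<and> (\<forall>x\<in>U. \<forall>y\<in>V. \<bar>c x y - C\<bar> \<le> \<eta>) \<longrightarrow>
     emeasure \<pi> (U \<times> V) \<le> ennreal (exp (- (C - \<eta>) / \<epsilon>)) * (A U * B V) \<and>
     ennreal (exp (- (C + \<eta>) / \<epsilon>)) * (A U * B V) \<le> emeasure \<pi> (U \<times> V)"
proof -
  obtain x0 :: 'a where True by simp
  obtain y0 :: 'b where True by simp
  obtain f a b where fm: "f \<in> borel_measurable (\<mu> \<Otimes>\<^sub>M \<nu>)" and pi: "\<pi> = density (\<mu> \<Otimes>\<^sub>M \<nu>) (\<lambda>z. ennreal (f z))"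
     and apos: "\<forall>x. a x > 0" and bpos: "\<forall>y. b y > 0" and
     key: "\<forall>x y. f (x, y) = exp (- c x y / \<epsilon>) * a x * b y" and
     adef: "\<forall>x y. a x = f (x, y0) * exp (c x y0 / \<epsilon>) * (exp (- c x0 y0 / \<epsilon>) / f (x0, y0))" and
     bdef: "\<forall>x y. b y = f (x0, y) * exp (c x0 y / \<epsilon>)"
    using factor[where xo=x0 and yo=y0, OF ci] by metis
  have sm: "sets \<mu> = sets borel" and sn: "sets \<nu> = sets borel"
    using bm bn unfolding borel_prob_def by auto
  have pm: "prob_space \<mu>" and pn: "prob_space \<nu>"
    using bm bn unfolding borel_prob_def by auto
  interpret N: prob_space \<nu> by (rule pn)
  interpret M: prob_space \<mu> by (rule pm)
  have spm: "space \<mu> = UNIV" using sm by (metis sets_eq_imp_space_eq space_borel)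
  have spn: "space \<nu> = UNIV" using sn by (metis sets_eq_imp_space_eq space_borel)
  have sP: "sets (\<mu> \<Otimes>\<^sub>M \<nu>) = sets borel"
    using sets_pair_measure_cong[OF sm sn] borel_prod by metis
  have cmb: "(\<lambda>z. c (fst z) (snd z)) \<in> borel_measurable borel"
    by (rule borel_measurable_continuous_onI[OF cc])
  have cm1: "(\<lambda>x. c x y1) \<in> borel_measurable \<mu>" for y1
  proof -
    have "(\<lambda>x. c (fst (x, y1)) (snd (x, y1))) \<in> borel_measurable borel"
      using cmb by measurable
    then show ?thesis by (subst measurable_cong_sets[OF sm refl]) simp
  qed
  have cm2: "(\<lambda>y. c x1 y) \<in> borel_measurable \<nu>" for x1
  proof -
    have "(\<lambda>y. c (fst (x1, y)) (snd (x1, y))) \<in> borel_measurable borel"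
      using cmb by measurable
    then show ?thesis by (subst measurable_cong_sets[OF sn refl]) simp
  qed
  have y0sp: "y0 \<in> space \<nu>" and x0sp: "x0 \<in> space \<mu>" using spm spn by auto
  have fm1: "(\<lambda>x. f (x, y0)) \<in> borel_measurable \<mu>"
    using fm y0sp by measurable
  have fm2: "(\<lambda>y. f (x0, y)) \<in> borel_measurable \<nu>"
    using fm x0sp by measurable
  have am: "a \<in> borel_measurable \<mu>"
  proof -
    have "(\<lambda>x. f (x, y0) * exp (c x y0 / \<epsilon>) * (exp (- c x0 y0 / \<epsilon>) / f (x0, y0))) \<in> borel_measurable \<mu>"
      using fm1 cm1 by measurable
    moreover have "a = (\<lambda>x. f (x, y0) * exp (c x y0 / \<epsilon>) * (exp (- c x0 y0 / \<epsilon>) / f (x0, y0)))"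
      using adef by auto
    ultimately show ?thesis by simp
  qed
  have bmm: "b \<in> borel_measurable \<nu>"
  proof -
    have "(\<lambda>y. f (x0, y) * exp (c x0 y / \<epsilon>)) \<in> borel_measurable \<nu>"
      using fm2 cm2 by measurable
    moreover have "b = (\<lambda>y. f (x0, y) * exp (c x0 y / \<epsilon>))"
      using bdef by auto
    ultimately show ?thesis by simp
  qed
  define A where "A U = (\<integral>\<^sup>+x. ennreal (a x) * indicator U x \<partial>\<mu>)" for U
  define B where "B V = (\<integral>\<^sup>+y. ennreal (b y) * indicator V y \<partial>\<nu>)" for V
  define G where "G U V z = ennreal (a (fst z)) * indicator U (fst z) * (ennreal (b (snd z)) * indicator V (snd z))" for U V z
  have Gm: "G U V \<in> borel_measurable (\<mu> \<Otimes>\<^sub>M \<nu>)" if "open U" "open V" for U V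
  proof -
    have [measurable]: "U \<in> sets \<mu>" "V \<in> sets \<nu>" using that sm sn by auto
    show ?thesis unfolding G_def using am bmm by measurable
  qed
  have GI: "(\<integral>\<^sup>+z. G U V z \<partial>(\<mu> \<Otimes>\<^sub>M \<nu>)) = A U * B V" if "open U" "open V" for U V
  proof -
    have [measurable]: "U \<in> sets \<mu>" "V \<in> sets \<nu>" using that sm sn by auto
    have "(\<integral>\<^sup>+z. G U V z \<partial>(\<mu> \<Otimes>\<^sub>M \<nu>)) = (\<integral>\<^sup>+x. \<integral>\<^sup>+y. G U V (x, y) \<partial>\<nu> \<partial>\<mu>)"
      using N.nn_integral_fst[OF Gm[OF that]] by simp
    also have "\<dots> = (\<integral>\<^sup>+x. (ennreal (a x) * indicator U x) * B V \<partial>\<mu>)"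
      unfolding G_def B_def
    proof (intro nn_integral_cong)
      fix x
      have bVm: "(\<lambda>y. ennreal (b y) * indicator V y) \<in> borel_measurable \<nu>" using bmm by measurable
      show "(\<integral>\<^sup>+y. ennreal (a (fst (x, y))) * indicator U (fst (x, y)) * (ennreal (b (snd (x, y))) * indicator V (snd (x, y))) \<partial>\<nu>) = ennreal (a x) * indicator U x * (\<integral>\<^sup>+y. ennreal (b y) * indicator V y \<partial>\<nu>)"
        using nn_integral_cmult[OF bVm, of "ennreal (a x) * indicator U x"] by simp
    qed
    also have "\<dots> = A U * B V" unfolding A_def
      by (rule nn_integral_multc) (use am in auto)
    finally show ?thesis .
  qed
  show ?thesis
  proof (intro exI[of _ A] exI[of _ B] allI impI conjI)
    fix U V C \<eta>
    assume h: "open U \<and> open V \<and> (\<forall>x\<in>U. \<forall>y\<in>V. \<bar>c x y - C\<bar> \<le> \<eta>)"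
    have [measurable]: "U \<in> sets \<mu>" "V \<in> sets \<nu>" using h sm sn by auto
    have UV: "U \<times> V \<in> sets (\<mu> \<Otimes>\<^sub>M \<nu>)" by simp
    have fz: "ennreal (f z) * indicator (U \<times> V) z = ennreal (exp (- c (fst z) (snd z) / \<epsilon>)) * G U V z" for z
    proof -
      obtain x y where z: "z = (x, y)" by fastforce
      show ?thesis unfolding z G_def using key apos bpos
        by (simp add: indicator_times ennreal_mult ac_simps less_imp_le)
    qed
    have E: "emeasure \<pi> (U \<times> V) = (\<integral>\<^sup>+z. ennreal (exp (- c (fst z) (snd z) / \<epsilon>)) * G U V z \<partial>(\<mu> \<Otimes>\<^sub>M \<nu>))"
      unfolding pi by (subst emeasure_density[OF _ UV]) (use fm fz in auto)
    have "emeasure \<pi> (U \<times> V) \<le> (\<integral>\<^sup>+z. ennreal (exp (- (C - \<eta>) / \<epsilon>)) * G U V z \<partial>(\<mu> \<Otimes>\<^sub>M \<nu>))"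
      unfolding E
    proof (rule nn_integral_mono)
      fix z
      show "ennreal (exp (- c (fst z) (snd z) / \<epsilon>)) * G U V z \<le> ennreal (exp (- (C - \<eta>) / \<epsilon>)) * G U V z"
      proof (cases "z \<in> U \<times> V")
        case True
        then have "\<bar>c (fst z) (snd z) - C\<bar> \<le> \<eta>" using h by auto
        then have "- c (fst z) (snd z) / \<epsilon> \<le> - (C - \<eta>) / \<epsilon>" using ep by (auto simp: field_simps abs_le_iff)
        then show ?thesis by (intro mult_right_mono ennreal_leI) auto
      next
        case False
        then show ?thesis unfolding G_def by (cases z) (auto simp: indicator_def)
      qed
    qed
    also have "\<dots> = ennreal (exp (- (C - \<eta>) / \<epsilon>)) * (A U * B V)"
      by (subst nn_integral_cmult) (use Gm h GI in auto)
    finally show "emeasure \<pi> (U \<times> V) \<le> ennreal (exp (- (C - \<eta>) / \<epsilon>)) * (A U * B V)" .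
    have "ennreal (exp (- (C + \<eta>) / \<epsilon>)) * (A U * B V) = (\<integral>\<^sup>+z. ennreal (exp (- (C + \<eta>) / \<epsilon>)) * G U V z \<partial>(\<mu> \<Otimes>\<^sub>M \<nu>))"
      by (subst nn_integral_cmult) (use Gm h GI in auto)
    also have "\<dots> \<le> emeasure \<pi> (U \<times> V)"
      unfolding E
    proof (rule nn_integral_mono)
      fix z
      show "ennreal (exp (- (C + \<eta>) / \<epsilon>)) * G U V z \<le> ennreal (exp (- c (fst z) (snd z) / \<epsilon>)) * G U V z"
      proof (cases "z \<in> U \<times> V")
        case True
        then have "\<bar>c (fst z) (snd z) - C\<bar> \<le> \<eta>" using h by auto
        then have "- (C + \<eta>) / \<epsilon> \<le> - c (fst z) (snd z) / \<epsilon>" using ep divide_right_mono[of "- (C + \<eta>)" "- c (fst z) (snd z)" \<epsilon>] by (auto simp: abs_le_iff)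
        then show ?thesis by (intro mult_right_mono ennreal_leI) auto
      next
        case False
        then show ?thesis unfolding G_def by (cases z) (auto simp: indicator_def)
      qed
    qed
    finally show "ennreal (exp (- (C + \<eta>) / \<epsilon>)) * (A U * B V) \<le> emeasure \<pi> (U \<times> V)" .
  qed
qed


lemma int_bounds:
  fixes M :: "'c::{metric_space,second_countable_topology} measure"
  assumes M: "borel_prob M" and s: "s > 0"
  shows "(\<integral>w. max 0 (s - dist w z) \<partial>M) \<le> s * measure M (ball z s)"
    and "(s/2) * measure M (ball z (s/2)) \<le> (\<integral>w. max 0 (s - dist w z) \<partial>M)"
proof -
  interpret prob_space M using M unfolding borel_prob_def by auto
  have sM: "sets M = sets borel" using M unfolding borel_prob_def by auto
  have spM: "space M = UNIV" using sM by (metis sets_eq_imp_space_eq space_borel)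
  have gb: "(\<lambda>w. max 0 (s - dist w z)) \<in> borel_measurable borel"
    by (intro borel_measurable_continuous_onI continuous_intros)
  then have gm: "(\<lambda>w. max 0 (s - dist w z)) \<in> borel_measurable M"
    by (subst measurable_cong_sets[OF sM refl])
  have gi: "integrable M (\<lambda>w. max 0 (s - dist w z))"
    by (rule integrable_const_bound[where B=s]) (use gm s in auto)
  have ballM: "ball z r \<in> sets M" for r using sM by simp
  have ii: "integrable M (\<lambda>w. r * indicator (ball z t) w)" for r t :: real
  proof (rule integrable_const_bound[where B="\<bar>r\<bar>"])
    show "AE w in M. norm (r * indicator (ball z t) w) \<le> \<bar>r\<bar>" by (auto simp: indicator_def)
    have [measurable]: "ball z t \<in> sets M" by (rule ballM)
    show "(\<lambda>w. r * indicator (ball z t) w) \<in> borel_measurable M" by measurable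
  qed
  have "(\<integral>w. max 0 (s - dist w z) \<partial>M) \<le> (\<integral>w. s * indicator (ball z s) w \<partial>M)"
    by (rule integral_mono[OF gi ii]) (use s in \<open>auto simp: indicator_def dist_commute\<close>)
  also have "\<dots> = s * measure M (ball z s)" using spM by simp
  finally show "(\<integral>w. max 0 (s - dist w z) \<partial>M) \<le> s * measure M (ball z s)" .
  have "(s/2) * measure M (ball z (s/2)) = (\<integral>w. (s/2) * indicator (ball z (s/2)) w \<partial>M)" using spM by simp
  also have "\<dots> \<le> (\<integral>w. max 0 (s - dist w z) \<partial>M)"
    by (rule integral_mono[OF ii gi]) (use s in \<open>auto simp: indicator_def dist_commute\<close>)
  finally show "(s/2) * measure M (ball z (s/2)) \<le> (\<integral>w. max 0 (s - dist w z) \<partial>M)" .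
qed

lemma lower_bound:
  fixes P :: "'i \<Rightarrow> 'c::{metric_space,second_countable_topology} measure"
  assumes wc: "weak_conv_filter P Q F" and ev: "eventually (\<lambda>i. borel_prob (P i)) F"
    and Q: "borel_prob Q" and z: "z \<in> spt Q" and s: "s > 0"
  shows "\<exists>q>0. eventually (\<lambda>i. measure (P i) (ball z s) \<ge> q) F"
proof -
  define g where "g w = max 0 (s - dist w z)" for w
  have gc: "continuous_on UNIV g" unfolding g_def by (intro continuous_intros)
  have gb: "bounded (range g)" unfolding g_def bounded_iff
    by (rule exI[of _ s]) (use s in auto)
  have lim: "((\<lambda>i. integral\<^sup>L (P i) g) \<longlongrightarrow> integral\<^sup>L Q g) F"
    using wc gc gb unfolding weak_conv_filter_def by blast
  interpret Qp: prob_space Q using Q unfolding borel_prob_def by auto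
  have sQ: "sets Q = sets borel" using Q unfolding borel_prob_def by auto
  have "emeasure Q (ball z (s/2)) > 0" using z s unfolding spt_def by auto
  then have mpos: "measure Q (ball z (s/2)) > 0"
    by (simp add: Qp.emeasure_eq_measure)
  have L: "integral\<^sup>L Q g > 0"
  proof -
    have "0 < (s/2) * measure Q (ball z (s/2))" using mpos s by simp
    also have "\<dots> \<le> integral\<^sup>L Q g" unfolding g_def by (rule int_bounds(2)[OF Q s])
    finally show ?thesis .
  qed
  have "eventually (\<lambda>i. integral\<^sup>L (P i) g > integral\<^sup>L Q g / 2) F"
    using order_tendstoD(1)[OF lim, of "integral\<^sup>L Q g / 2"] L by simp
  then have "eventually (\<lambda>i. measure (P i) (ball z s) \<ge> integral\<^sup>L Q g / (2 * s)) F"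
    using ev
  proof eventually_elim
    case (elim i)
    have "integral\<^sup>L Q g / 2 \<le> s * measure (P i) (ball z s)"
      using elim int_bounds(1)[OF elim(2) s, of z] unfolding g_def by simp
    then show ?case using s by (simp add: field_simps)
  qed
  then show ?thesis using L s by (intro exI[of _ "integral\<^sup>L Q g / (2 * s)"]) auto
qed


lemma cont_pt:
  fixes c :: "'a::metric_space \<Rightarrow> 'b::metric_space \<Rightarrow> real"
  assumes cc: "continuous_on UNIV (\<lambda>z. c (fst z) (snd z))" and eta: "\<eta> > 0"
  shows "\<forall>\<^sub>F s in at_right 0. \<forall>x'\<in>ball x1 s. \<forall>y'\<in>ball y1 s. \<bar>c x' y' - c x1 y1\<bar> \<le> \<eta>"
proof -
  have "continuous (at (x1, y1)) (\<lambda>z. c (fst z) (snd z))"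
    using cc continuous_on_eq_continuous_at open_UNIV by blast
  then obtain d where d: "d > 0" and dd: "\<forall>z. dist z (x1, y1) < d \<longrightarrow> dist (c (fst z) (snd z)) (c x1 y1) < \<eta>"
    unfolding continuous_at_eps_delta using eta by fastforce
  show ?thesis unfolding eventually_at_right_field
  proof (intro exI[of _ "d/2"] conjI allI impI ballI)
    show "0 < d/2" using d by simp
    fix s x' y' assume s: "0 < s" "s < d/2" and x': "x' \<in> ball x1 s" and y': "y' \<in> ball y1 s"
    have "dist (x', y') (x1, y1) \<le> dist x' x1 + dist y' y1"
      unfolding dist_Pair_Pair by (rule sqrt_sum_squares_le_sum) auto
    also have "\<dots> < d" using x' y' s by (simp add: dist_commute)
    finally have "dist (c x' y') (c x1 y1) < \<eta>" using dd by (metis fst_conv snd_conv)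
    then show "\<bar>c x' y' - c x1 y1\<bar> \<le> \<eta>" by (simp add: dist_real_def)
  qed
qed

theorem lemma4p1:
  fixes \<mu> :: "'a::polish_space measure" and \<nu> :: "'b::polish_space measure"
    and c :: "'a \<Rightarrow> 'b \<Rightarrow> real"
    and \<pi>\<epsilon> :: "real \<Rightarrow> ('a \<times> 'b) measure" and \<pi>s :: "('a \<times> 'b) measure"
    and x :: 'a and y :: 'b and k :: nat
    and xs :: "nat \<Rightarrow> 'a" and ys :: "nat \<Rightarrow> 'b" and \<delta> \<delta>0 :: real
  assumes "borel_prob \<mu>" and "borel_prob \<nu>"
    and "continuous_on UNIV (\<lambda>z. c (fst z) (snd z))" and "\<forall>a b. c a b \<ge> 0"
    and "\<forall>\<epsilon>>0. cyclically_invariant c \<epsilon> \<mu> \<nu> (\<pi>\<epsilon> \<epsilon>)"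
    and "coupling \<mu> \<nu> \<pi>s"
    and "weak_conv_filter \<pi>\<epsilon> \<pi>s (at_right 0)"
    and "k \<ge> 2"
    and "xs 1 = x" and "ys 1 = y" and "ys (k + 1) = ys 1"
    and "\<forall>i\<in>{2..k}. (xs i, ys i) \<in> spt \<pi>s"
    and "\<delta>0 = (\<Sum>i=1..k. c (xs i) (ys i)) - (\<Sum>i=1..k. c (xs i) (ys (i + 1)))"
    and "\<delta>0 > 0"
    and "\<delta> < \<delta>0"
  shows "\<exists>\<alpha> r \<epsilon>0. \<alpha> > 0 \<and> r > 0 \<and> \<epsilon>0 > 0 \<and>
           (\<forall>\<epsilon>. 0 < \<epsilon> \<and> \<epsilon> \<le> \<epsilon>0 \<longrightarrow>
              measure (\<pi>\<epsilon> \<epsilon>) (ball (x, y) r) \<le> \<alpha> * exp (- \<delta> / \<epsilon>))"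
proof -
  note bm = assms(1) and bn = assms(2) and cc = assms(3) and ciA = assms(5)
    and cpl = assms(6) and wc = assms(7) and k2 = assms(8) and yk = assms(11)
    and spt = assms(12) and d0 = assms(13) and dd = assms(15)
  define \<eta> where "\<eta> = (\<delta>0 - \<delta>) / (2 * real k)"
  have eta: "\<eta> > 0" unfolding \<eta>_def using k2 dd by simp
  have "\<forall>\<^sub>F s in at_right 0. \<forall>i\<in>{1..k}.
      (\<forall>x'\<in>ball (xs i) s. \<forall>y'\<in>ball (ys i) s. \<bar>c x' y' - c (xs i) (ys i)\<bar> \<le> \<eta>) \<and>
      (\<forall>x'\<in>ball (xs i) s. \<forall>y'\<in>ball (ys (i+1)) s. \<bar>c x' y' - c (xs i) (ys (i+1))\<bar> \<le> \<eta>)"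
    by (intro eventually_ball_finite ballI eventually_conj cont_pt[OF cc eta]) auto
  then obtain b where b: "b > 0" and bP: "\<forall>s>0. s < b \<longrightarrow> (\<forall>i\<in>{1..k}.
      (\<forall>x'\<in>ball (xs i) s. \<forall>y'\<in>ball (ys i) s. \<bar>c x' y' - c (xs i) (ys i)\<bar> \<le> \<eta>) \<and>
      (\<forall>x'\<in>ball (xs i) s. \<forall>y'\<in>ball (ys (i+1)) s. \<bar>c x' y' - c (xs i) (ys (i+1))\<bar> \<le> \<eta>))"
    unfolding eventually_at_right_field by blast
  define s where "s = b / 2"
  have s: "s > 0" unfolding s_def using b by simp
  have slb: "s < b" unfolding s_def using b by simp
  have sP: "\<forall>i\<in>{1..k}.
      (\<forall>x'\<in>ball (xs i) s. \<forall>y'\<in>ball (ys i) s. \<bar>c x' y' - c (xs i) (ys i)\<bar> \<le> \<eta>) \<and>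
      (\<forall>x'\<in>ball (xs i) s. \<forall>y'\<in>ball (ys (i+1)) s. \<bar>c x' y' - c (xs i) (ys (i+1))\<bar> \<le> \<eta>)"
    using bP s slb by blast
  have bpe: "borel_prob (\<pi>\<epsilon> e)" if "e > 0" for e
    using ciA that unfolding cyclically_invariant_def coupling_def by blast
  have evp: "\<forall>\<^sub>F e in at_right 0. borel_prob (\<pi>\<epsilon> e)"
    using eventually_at_right_less[of "0::real"] by eventually_elim (rule bpe)
  have bps: "borel_prob \<pi>s" using cpl unfolding coupling_def by blast
  have "\<forall>i\<in>{2..k}. \<exists>q>0. \<forall>\<^sub>F e in at_right 0. measure (\<pi>\<epsilon> e) (ball (xs i, ys i) s) \<ge> q"
    using lower_bound[OF wc evp bps _ s] spt by blast
  then obtain q where q: "\<forall>i\<in>{2..k}. q i > 0 \<and> (\<forall>\<^sub>F e in at_right 0. measure (\<pi>\<epsilon> e) (ball (xs i, ys i) s) \<ge> q i)"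
    by metis
  have "\<forall>\<^sub>F e in at_right 0. \<forall>i\<in>{2..k}. measure (\<pi>\<epsilon> e) (ball (xs i, ys i) s) \<ge> q i"
    using q by (intro eventually_ball_finite) auto
  then obtain e1 where e1: "e1 > 0" and e1P: "\<forall>e>0. e < e1 \<longrightarrow> (\<forall>i\<in>{2..k}. measure (\<pi>\<epsilon> e) (ball (xs i, ys i) s) \<ge> q i)"
    unfolding eventually_at_right_field by auto
  define Q where "Q = (\<Prod>i\<in>{2..k}. q i)"
  have Q: "Q > 0" unfolding Q_def using q by (intro prod_pos) auto
  show ?thesis
  proof (rule exI[of _ "1 / Q"], rule exI[of _ s], rule exI[of _ "e1 / 2"], intro conjI allI impI)
    show "1 / Q > 0" using Q by auto
    show "s > 0" using s by auto
    show "e1 / 2 > 0" using e1 by auto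
    fix \<epsilon> assume ee: "0 < \<epsilon> \<and> \<epsilon> \<le> e1 / 2"
    have e_pos: "\<epsilon> > 0" and e_lt: "\<epsilon> < e1" using ee e1 by auto
    have qb: "\<forall>i\<in>{2..k}. measure (\<pi>\<epsilon> \<epsilon>) (ball (xs i, ys i) s) \<ge> q i" using e1P e_pos e_lt by blast
    have ci: "cyclically_invariant c \<epsilon> \<mu> \<nu> (\<pi>\<epsilon> \<epsilon>)" using ciA e_pos by blast
    define \<pi> where "\<pi> = \<pi>\<epsilon> \<epsilon>"
    have bp: "borel_prob \<pi>" unfolding \<pi>_def by (rule bpe[OF e_pos])
    interpret P: prob_space \<pi> using bp unfolding borel_prob_def by auto
    have sPi: "sets \<pi> = sets borel" using bp unfolding borel_prob_def by auto
    obtain A B where AB: "\<forall>U V C h. open U \<and> open V \<and> (\<forall>x\<in>U. \<forall>y\<in>V. \<bar>c x y - C\<bar> \<le> h) \<longrightarrow>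
     emeasure \<pi> (U \<times> V) \<le> ennreal (exp (- (C - h) / \<epsilon>)) * (A U * B V) \<and>
     ennreal (exp (- (C + h) / \<epsilon>)) * (A U * B V) \<le> emeasure \<pi> (U \<times> V)"
      using rect_bounds[OF bm bn cc ci[folded \<pi>_def] e_pos] by blast
    define Ai where "Ai i = A (ball (xs i) s)" for i
    define Bj where "Bj j = B (ball (ys j) s)" for j
    define E where "E i j = emeasure \<pi> (ball (xs i) s \<times> ball (ys j) s)" for i j
    define e1f where "e1f i = exp (- (c (xs i) (ys i) - \<eta>) / \<epsilon>)" for i
    define e2f where "e2f i = exp ((c (xs i) (ys (i+1)) + \<eta>) / \<epsilon>)" for i
    have up: "E i i \<le> ennreal (e1f i) * (Ai i * Bj i)" if "i \<in> {1..k}" for i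
      using AB[rule_format, of "ball (xs i) s" "ball (ys i) s" "c (xs i) (ys i)" \<eta>] sP that
      unfolding E_def e1f_def Ai_def Bj_def by auto
    have lo: "Ai i * Bj (i+1) \<le> ennreal (e2f i)" if "i \<in> {1..k}" for i
    proof -
      have "ennreal (exp (- (c (xs i) (ys (i+1)) + \<eta>) / \<epsilon>)) * (Ai i * Bj (i+1)) \<le> E i (i+1)"
        using AB[rule_format, of "ball (xs i) s" "ball (ys (i+1)) s" "c (xs i) (ys (i+1))" \<eta>] sP that
        unfolding E_def Ai_def Bj_def by auto
      also have "\<dots> \<le> 1" unfolding E_def by (rule P.emeasure_le_1)
      finally have h: "ennreal (exp (- (c (xs i) (ys (i+1)) + \<eta>) / \<epsilon>)) * (Ai i * Bj (i+1)) \<le> 1" .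
      have one: "ennreal (e2f i) * ennreal (exp (- (c (xs i) (ys (i+1)) + \<eta>) / \<epsilon>)) = 1"
        unfolding e2f_def by (simp add: ennreal_mult[symmetric] exp_add[symmetric] add_divide_distrib[symmetric])
      have "Ai i * Bj (i+1) = ennreal (e2f i) * (ennreal (exp (- (c (xs i) (ys (i+1)) + \<eta>) / \<epsilon>)) * (Ai i * Bj (i+1)))"
        unfolding mult.assoc[symmetric] one by simp
      also have "\<dots> \<le> ennreal (e2f i) * 1" by (rule mult_left_mono[OF h]) simp
      finally show ?thesis by simp
    qed
    have p1: "(\<Prod>i\<in>{1..k}. Bj (i+1)) = (\<Prod>i\<in>{Suc 1..Suc k}. Bj i)"
      by (subst prod.shift_bounds_cl_Suc_ivl) simp
    have p2: "(\<Prod>i\<in>{Suc 1..Suc k}. Bj i) = (\<Prod>i\<in>{2..k}. Bj i) * Bj (Suc k)"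
      using k2 by (simp add: numeral_2_eq_2)
    have p3: "Bj (Suc k) = Bj 1" unfolding Bj_def using yk by simp
    have p4: "(\<Prod>i\<in>{1..k}. Bj i) = Bj 1 * (\<Prod>i\<in>{2..k}. Bj i)"
      using k2 by (subst prod.atLeast_Suc_atMost) (auto simp: numeral_2_eq_2)
    have shiftB: "(\<Prod>i\<in>{1..k}. Bj (i+1)) = (\<Prod>i\<in>{1..k}. Bj i)"
      unfolding p1 p2 p3 p4 by (simp add: mult.commute)
    have X: "(\<Prod>i\<in>{1..k}. Ai i) * (\<Prod>i\<in>{1..k}. Bj (i+1)) \<le> (\<Prod>i\<in>{1..k}. ennreal (e2f i))"
      unfolding prod.distrib[symmetric] by (rule ennreal_prod_mono) (rule lo)
    have sumeq: "(\<Sum>i\<in>{1..k}. (- (c (xs i) (ys i) - \<eta>) / \<epsilon> + (c (xs i) (ys (i+1)) + \<eta>) / \<epsilon>)) = - \<delta> / \<epsilon>"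
    proof -
      have "(\<Sum>i\<in>{1..k}. (- (c (xs i) (ys i) - \<eta>) / \<epsilon> + (c (xs i) (ys (i+1)) + \<eta>) / \<epsilon>))
          = (\<Sum>i\<in>{1..k}. (c (xs i) (ys (i+1)) - c (xs i) (ys i) + 2 * \<eta>)) / \<epsilon>"
        unfolding sum_divide_distrib by (rule sum.cong) (use e_pos in \<open>auto simp: field_simps\<close>)
      also have "(\<Sum>i\<in>{1..k}. (c (xs i) (ys (i+1)) - c (xs i) (ys i) + 2 * \<eta>)) = - \<delta>0 + real k * (2 * \<eta>)"
        using d0 by (simp add: sum.distrib sum_subtractf)
      also have "- \<delta>0 + real k * (2 * \<eta>) = - \<delta>" unfolding \<eta>_def using k2 by (simp add: field_simps)
      finally show ?thesis .
    qed
    have prodexp: "(\<Prod>i\<in>{1..k}. ennreal (e1f i)) * (\<Prod>i\<in>{1..k}. ennreal (e2f i)) = ennreal (exp (- \<delta> / \<epsilon>))"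
    proof -
      have "(\<Prod>i\<in>{1..k}. ennreal (e1f i)) * (\<Prod>i\<in>{1..k}. ennreal (e2f i)) = (\<Prod>i\<in>{1..k}. ennreal (e1f i * e2f i))"
        unfolding prod.distrib[symmetric] by (rule prod.cong) (auto simp: ennreal_mult e1f_def e2f_def)
      also have "\<dots> = ennreal (\<Prod>i\<in>{1..k}. e1f i * e2f i)"
        by (rule prod_ennreal) (simp add: e1f_def e2f_def)
      also have "(\<Prod>i\<in>{1..k}. e1f i * e2f i) = exp (\<Sum>i\<in>{1..k}. (- (c (xs i) (ys i) - \<eta>) / \<epsilon> + (c (xs i) (ys (i+1)) + \<eta>) / \<epsilon>))"
        unfolding exp_sum[OF finite_atLeastAtMost] e1f_def e2f_def exp_add ..
      finally show ?thesis unfolding sumeq .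
    qed
    have main: "(\<Prod>i\<in>{1..k}. E i i) \<le> ennreal (exp (- \<delta> / \<epsilon>))"
    proof -
      have "(\<Prod>i\<in>{1..k}. E i i) \<le> (\<Prod>i\<in>{1..k}. ennreal (e1f i) * (Ai i * Bj i))"
        by (rule ennreal_prod_mono) (rule up)
      also have "\<dots> = (\<Prod>i\<in>{1..k}. ennreal (e1f i)) * ((\<Prod>i\<in>{1..k}. Ai i) * (\<Prod>i\<in>{1..k}. Bj (i+1)))"
        unfolding prod.distrib shiftB ..
      also have "\<dots> \<le> (\<Prod>i\<in>{1..k}. ennreal (e1f i)) * (\<Prod>i\<in>{1..k}. ennreal (e2f i))"
        by (rule mult_left_mono[OF X]) simp
      finally show ?thesis unfolding prodexp .
    qed
    have Rsets: "ball (xs i) s \<times> ball (ys j) s \<in> sets \<pi>" for i j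
      using sPi by (simp add: open_Times)
    have Eeq: "E i j = ennreal (measure \<pi> (ball (xs i) s \<times> ball (ys j) s))" for i j
      unfolding E_def by (simp add: P.emeasure_eq_measure)
    have ballsub: "ball (a, b') s \<subseteq> ball a s \<times> ball b' s" for a :: 'a and b' :: 'b
    proof (clarsimp simp: subset_iff)
      fix a' b2 assume h: "dist (a, b') (a', b2) < s"
      show "dist a a' < s \<and> dist b' b2 < s"
        using h dist_fst_le[of "(a, b')" "(a', b2)"] dist_snd_le[of "(a, b')" "(a', b2)"] by simp
    qed
    have Elow: "ennreal (q i) \<le> E i i" if "i \<in> {2..k}" for i
    proof -
      have "q i \<le> measure \<pi> (ball (xs i, ys i) s)" using qb that unfolding \<pi>_def by blast
      also have "\<dots> \<le> measure \<pi> (ball (xs i) s \<times> ball (ys i) s)"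
        by (rule P.finite_measure_mono[OF ballsub Rsets])
      finally show ?thesis unfolding Eeq by (rule ennreal_leI)
    qed
    have "ennreal (measure \<pi> (ball (xs 1) s \<times> ball (ys 1) s)) * ennreal Q \<le> E 1 1 * (\<Prod>i\<in>{2..k}. E i i)"
    proof (rule mult_mono)
      show "ennreal Q \<le> (\<Prod>i\<in>{2..k}. E i i)"
      proof -
        have "ennreal Q = (\<Prod>i\<in>{2..k}. ennreal (q i))"
          unfolding Q_def using q by (intro prod_ennreal[symmetric]) (auto intro: less_imp_le)
        also have "\<dots> \<le> (\<Prod>i\<in>{2..k}. E i i)" by (rule ennreal_prod_mono) (rule Elow)
        finally show ?thesis .
      qed
    qed (auto simp: Eeq)
    also have "E 1 1 * (\<Prod>i\<in>{2..k}. E i i) = (\<Prod>i\<in>{1..k}. E i i)"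
      using k2 by (subst (2) prod.atLeast_Suc_atMost) (auto simp: numeral_2_eq_2)
    also note main
    finally have "ennreal (measure \<pi> (ball (xs 1) s \<times> ball (ys 1) s) * Q) \<le> ennreal (exp (- \<delta> / \<epsilon>))"
      using Q by (simp add: ennreal_mult)
    then have m1: "measure \<pi> (ball (xs 1) s \<times> ball (ys 1) s) * Q \<le> exp (- \<delta> / \<epsilon>)" by simp
    have "measure \<pi> (ball (x, y) s) \<le> measure \<pi> (ball (xs 1) s \<times> ball (ys 1) s)"
      using assms(9,10) ballsub[of "xs 1" "ys 1"] by (intro P.finite_measure_mono[OF _ Rsets]) simp
    also have "\<dots> \<le> exp (- \<delta> / \<epsilon>) / Q" using m1 Q by (simp add: field_simps)
    finally show "measure (\<pi>\<epsilon> \<epsilon>) (ball (x, y) s) \<le> 1 / Q * exp (- \<delta> / \<epsilon>)"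
      unfolding \<pi>_def by simp
  qed
qed

end
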